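(* Let $(E,\mathcal{P})$ be a random locally convex module over $K$ with base $(\Omega,\mathcal{F},P)$, where $(\Omega,\mathcal{F},P)$ is nonatomic. If $f:E\to L^0(\mathcal F,K)$ is a module homomorphism that is continuous from $(E,\mathcal{T}_{\varepsilon,\lambda})$ to $(L^{0}(\mathcal{F},K),\mathcal{T}_{c})$ (i.e. $f\in E^\ast_{min}$), then $f(x)=0$ for all $x\in E$.
   Context: $(\Omega,\mathcal{F},P)$ is a probability space, $K=\mathbb{R}$ or $\mathbb{C}$, and $L^{0}(\mathcal{F},K)$ is the algebra of equivalence classes (modulo a.s. equality) of $K$-valued measurable random variables. $L^0(\mathcal F,\mathbb R)$ is ordered by $\xi\le\eta$ iff $\xi^0\le\eta^0$ a.s.; $L^{0}_{+}=\{\xi\ge 0\}$, $L^{0}_{++}=\{\xi: \xi>0 \text{ a.s. on }\Omega\}$. An $L^0$-seminorm on a left $L^0(\mathcal F,K)$-module $E$ is a map $\|\cdot\|:E\to L^0_+$ with $\|x+y\|\le\|x\|+\|y\|$ and $\|\xi x\|=|\xi|\,\|x\|$ for all $\xi\in L^0(\mathcal F,K)$. A random locally convex module $(E,\mathcal P)$ is a left $L^0(\mathcal F,K)$-module $E$ with a family $\mathcal P$ of $L^0$-seminorms such that $\bigvee\{\|x\|:\|\cdot\|\in\mathcal P\}=0$ implies $x=0$. For finite $\mathcal Q\subset\mathcal P$, $\|x\|_{\mathcal Q}=\bigvee_{\|\cdot\|\in\mathcal Q}\|x\|$. The $(\varepsilon,\lambda)$-topology $\mathcal T_{\varepsilon,\lambda}$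 on $E$ has local base at $0$ the sets $\{x: P\{\omega:\|x\|_{\mathcal Q}(\omega)<\varepsilon\}>1-\lambda\}$, $\mathcal Q$ finite, $\varepsilon>0$, $0<\lambda<1$. The locally $L^0$-convex topology $\mathcal T_c$: $G$ is open iff for every $x\in G$ there are finite $\mathcal Q\subset\mathcal P$ and $\varepsilon\in L^0_{++}$ with $x+\{y:\|y\|_{\mathcal Q}\le\varepsilon\}\subset G$. $L^0(\mathcal F,K)$ is regarded as a random locally convex module with $\mathcal P=\{|\cdot|\}$. A probability space is nonatomic if it has no atom, where an atom is $A\in\mathcal F$ with $P(A)>0$ such that every measurable $B\subset A$ has $P(B)=0$ or $P(A\setminus B)=0$. *)

theory Defs
  imports "HOL-Probability.Probability"
begin

text \<open>Elements of L0(F,K) are represented by measurable K-valued functions on Omega;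
  the scalar field K is R or C, encoded as a subset Kset of the complex numbers
  (Kset = range of_real for K = R, Kset = UNIV for K = C).  Equality in L0 is
  almost-sure equality; all notions below respect it.\<close>

definition L0 :: "'w measure \<Rightarrow> complex set \<Rightarrow> ('w \<Rightarrow> complex) set" where
  "L0 M Kset = {\<xi>. \<xi> \<in> borel_measurable M \<and> (\<forall>\<omega>\<in>space M. \<xi> \<omega> \<in> Kset)}"

definition L0_pp :: "'w measure \<Rightarrow> ('w \<Rightarrow> real) set" where
  "L0_pp M = {\<epsilon>. \<epsilon> \<in> borel_measurable M \<and> (AE \<omega> in M. \<epsilon> \<omega> > 0)}"

definition is_atom :: "'w measure \<Rightarrow> 'w set \<Rightarrow> bool" where
  "is_atom M A \<longleftrightarrow> A \<in> sets M \<and> measure M A > 0 \<and>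
     (\<forall>B\<in>sets M. B \<subseteq> A \<longrightarrow> measure M B = 0 \<or> measure M (A - B) = 0)"

definition nonatomic :: "'w measure \<Rightarrow> bool" where
  "nonatomic M \<longleftrightarrow> (\<nexists>A. is_atom M A)"

definition L0_module :: "'w measure \<Rightarrow> complex set \<Rightarrow> (('w \<Rightarrow> complex) \<Rightarrow> 'e::ab_group_add \<Rightarrow> 'e) \<Rightarrow> bool" where
  "L0_module M Kset smul \<longleftrightarrow>
     (\<forall>\<xi>\<in>L0 M Kset. \<forall>\<eta>\<in>L0 M Kset. (AE \<omega> in M. \<xi> \<omega> = \<eta> \<omega>) \<longrightarrow> (\<forall>x. smul \<xi> x = smul \<eta> x)) \<and>
     (\<forall>\<xi>\<in>L0 M Kset. \<forall>x y. smul \<xi> (x + y) = smul \<xi> x + smul \<xi> y) \<and>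
     (\<forall>\<xi>\<in>L0 M Kset. \<forall>\<eta>\<in>L0 M Kset. \<forall>x. smul (\<lambda>\<omega>. \<xi> \<omega> + \<eta> \<omega>) x = smul \<xi> x + smul \<eta> x) \<and>
     (\<forall>\<xi>\<in>L0 M Kset. \<forall>\<eta>\<in>L0 M Kset. \<forall>x. smul (\<lambda>\<omega>. \<xi> \<omega> * \<eta> \<omega>) x = smul \<xi> (smul \<eta> x)) \<and>
     (\<forall>x. smul (\<lambda>\<omega>. 1) x = x)"

definition L0_seminorm :: "'w measure \<Rightarrow> complex set \<Rightarrow> (('w \<Rightarrow> complex) \<Rightarrow> 'e::ab_group_add \<Rightarrow> 'e)
    \<Rightarrow> ('e \<Rightarrow> 'w \<Rightarrow> real) \<Rightarrow> bool" where
  "L0_seminorm M Kset smul p \<longleftrightarrow>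
     (\<forall>x. p x \<in> borel_measurable M \<and> (AE \<omega> in M. p x \<omega> \<ge> 0)) \<and>
     (\<forall>x y. AE \<omega> in M. p (x + y) \<omega> \<le> p x \<omega> + p y \<omega>) \<and>
     (\<forall>\<xi>\<in>L0 M Kset. \<forall>x. AE \<omega> in M. p (smul \<xi> x) \<omega> = cmod (\<xi> \<omega>) * p x \<omega>)"

text \<open>Random locally convex module (E, P): the seminorms separate points,
  i.e. the L0-supremum of all \<parallel>x\<parallel> (which are \<ge> 0) is 0 only for x = 0.\<close>
definition RLC_module :: "'w measure \<Rightarrow> complex set \<Rightarrow> (('w \<Rightarrow> complex) \<Rightarrow> 'e::ab_group_add \<Rightarrow> 'e)
    \<Rightarrow> ('e \<Rightarrow> 'w \<Rightarrow> real) set \<Rightarrow> bool" where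
  "RLC_module M Kset smul \<P> \<longleftrightarrow>
     L0_module M Kset smul \<and> (\<forall>p\<in>\<P>. L0_seminorm M Kset smul p) \<and>
     (\<forall>x. (\<forall>p\<in>\<P>. AE \<omega> in M. p x \<omega> = 0) \<longrightarrow> x = 0)"

definition normQ :: "('e \<Rightarrow> 'w \<Rightarrow> real) set \<Rightarrow> 'e \<Rightarrow> 'w \<Rightarrow> real" where
  "normQ Q x \<omega> = Max ((\<lambda>p. p x \<omega>) ` Q)"

definition eps_lambda_open :: "'w measure \<Rightarrow> ('e::ab_group_add \<Rightarrow> 'w \<Rightarrow> real) set \<Rightarrow> 'e set \<Rightarrow> bool" where
  "eps_lambda_open M \<P> G \<longleftrightarrow>
     (\<forall>x\<in>G. \<exists>Q \<epsilon> lam. finite Q \<and> Q \<noteq> {} \<and> Q \<subseteq> \<P> \<and> \<epsilon> > 0 \<and> 0 < lam \<and> lam < 1 \<and>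
        {x + y | y. measure M {\<omega> \<in> space M. normQ Q y \<omega> < \<epsilon>} > 1 - lam} \<subseteq> G)"

definition Tc_open_L0 :: "'w measure \<Rightarrow> complex set \<Rightarrow> ('w \<Rightarrow> complex) set \<Rightarrow> bool" where
  "Tc_open_L0 M Kset G \<longleftrightarrow> G \<subseteq> L0 M Kset \<and>
     (\<forall>\<xi>\<in>G. \<exists>\<epsilon>\<in>L0_pp M.
        {\<eta> \<in> L0 M Kset. AE \<omega> in M. cmod (\<eta> \<omega> - \<xi> \<omega>) \<le> \<epsilon> \<omega>} \<subseteq> G)"

definition L0_module_hom :: "'w measure \<Rightarrow> complex set \<Rightarrow> (('w \<Rightarrow> complex) \<Rightarrow> 'e::ab_group_add \<Rightarrow> 'e)
    \<Rightarrow> ('e \<Rightarrow> 'w \<Rightarrow> complex) \<Rightarrow> bool" where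
  "L0_module_hom M Kset smul f \<longleftrightarrow>
     (\<forall>x. f x \<in> L0 M Kset) \<and>
     (\<forall>x y. AE \<omega> in M. f (x + y) \<omega> = f x \<omega> + f y \<omega>) \<and>
     (\<forall>\<xi>\<in>L0 M Kset. \<forall>x. AE \<omega> in M. f (smul \<xi> x) \<omega> = \<xi> \<omega> * f x \<omega>)"

end

theory Submission
  imports Defs
begin

lemma halve_step:
  assumes P: "prob_space M" and na: "nonatomic M"
    and A: "A \<in> sets M" "measure M A > 0"
  shows "\<exists>B\<in>sets M. B \<subseteq> A \<and> 0 < measure M B \<and> measure M B \<le> measure M A / 2"
proof -
  interpret prob_space M by fact
  have "\<not> is_atom M A" using na unfolding nonatomic_def by blast
  then obtain C where C: "C \<in> sets M" "C \<subseteq> A" "measure M C \<noteq> 0" "measure M (A - C) \<noteq> 0"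
    using A unfolding is_atom_def by blast
  have sum: "measure M A = measure M C + measure M (A - C)"
    using C A finite_measure_Diff[of A C] finite_measure_mono[of C A] by auto
  have p1: "measure M C > 0" using C(3) measure_nonneg[of M C] by linarith
  have p2: "measure M (A - C) > 0" using C(4) measure_nonneg[of M "A - C"] by linarith
  show ?thesis
  proof (cases "measure M C \<le> measure M A / 2")
    case True then show ?thesis using C p1 by blast
  next
    case False
    then have "measure M (A - C) \<le> measure M A / 2" using sum by linarith
    then show ?thesis using C A p2 by blast
  qed
qed

lemma small_subset:
  assumes P: "prob_space M" and na: "nonatomic M"
    and A: "A \<in> sets M" "measure M A > 0" and lam: "lam > 0"
  shows "\<exists>B\<in>sets M. B \<subseteq> A \<and> 0 < measure M B \<and> measure M B < lam"
proof -
  interpret prob_space M by fact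
  have ind: "\<exists>B\<in>sets M. B \<subseteq> A \<and> 0 < measure M B \<and> measure M B \<le> measure M A / 2^n" for n
  proof (induction n)
    case 0 then show ?case using A by auto
  next
    case (Suc n)
    then obtain B where B: "B \<in> sets M" "B \<subseteq> A" "0 < measure M B" "measure M B \<le> measure M A / 2^n"
      by blast
    obtain B' where B': "B' \<in> sets M" "B' \<subseteq> B" "0 < measure M B'" "measure M B' \<le> measure M B / 2"
      using halve_step[OF P na B(1) B(3)] by blast
    have "measure M B' \<le> measure M A / 2^Suc n" 
    proof -
      have "measure M B / 2 \<le> (measure M A / 2^n) / 2" using B(4) by (rule divide_right_mono) simp
      moreover have "(measure M A / 2^n) / 2 = measure M A / 2^Suc n" by simp
      ultimately show ?thesis using B'(4) by linarith
    qed
    then show ?case using B B' by blast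
  qed
  obtain n where n: "(1/2::real)^n < lam" using real_arch_pow_inv[of lam "1/2"] lam by auto
  obtain B where B: "B \<in> sets M" "B \<subseteq> A" "0 < measure M B" "measure M B \<le> measure M A / 2^n"
    using ind by blast
  have "measure M A \<le> 1" by simp
  then have "measure M A / 2^n \<le> 1 / 2^n" by (rule divide_right_mono) simp
  also have "1 / 2^n = (1/2::real)^n" by (simp add: power_divide)
  finally have "measure M B < lam" using B(4) n by linarith
  then show ?thesis using B by blast
qed

theorem theorem1p2:
  fixes M :: "'w measure" and Kset :: "complex set"
    and smul :: "('w \<Rightarrow> complex) \<Rightarrow> 'e::ab_group_add \<Rightarrow> 'e"
    and \<P> :: "('e \<Rightarrow> 'w \<Rightarrow> real) set"
    and f :: "'e \<Rightarrow> 'w \<Rightarrow> complex"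
  assumes "prob_space M"
    and "nonatomic M"
    and "Kset = range complex_of_real \<or> Kset = UNIV"
    and "RLC_module M Kset smul \<P>"
    and "L0_module_hom M Kset smul f"
    and "\<forall>G. Tc_open_L0 M Kset G \<longrightarrow> eps_lambda_open M \<P> (f -` G)"
  shows "\<forall>x. AE \<omega> in M. f x \<omega> = 0"
proof (intro allI)
  fix x
  interpret prob_space M by fact
  have semi: "\<forall>p\<in>\<P>. L0_seminorm M Kset smul p" using assms(4) unfolding RLC_module_def by blast
  have fL0: "\<And>x. f x \<in> L0 M Kset"
    and fadd: "\<And>x y. AE \<omega> in M. f (x + y) \<omega> = f x \<omega> + f y \<omega>"
    and fsmul: "\<And>\<xi> x. \<xi> \<in> L0 M Kset \<Longrightarrow> AE \<omega> in M. f (smul \<xi> x) \<omega> = \<xi> \<omega> * f x \<omega>"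
    using assms(5) unfolding L0_module_hom_def by blast+
  have Kreal: "\<And>r::real. complex_of_real r \<in> Kset" using assms(3) by auto
  define G where "G = {\<eta> \<in> L0 M Kset. AE \<omega> in M. cmod (\<eta> \<omega>) < 1}"
  have Gopen: "Tc_open_L0 M Kset G"
    unfolding Tc_open_L0_def
  proof (intro conjI ballI)
    show "G \<subseteq> L0 M Kset" by (auto simp: G_def)
    fix \<xi> assume xi: "\<xi> \<in> G"
    let ?e = "\<lambda>\<omega>. (1 - cmod (\<xi> \<omega>)) / 2"
    have xim[measurable]: "\<xi> \<in> borel_measurable M" using xi by (auto simp: G_def L0_def)
    have xiAE: "AE \<omega> in M. cmod (\<xi> \<omega>) < 1" using xi by (auto simp: G_def)
    have "?e \<in> borel_measurable M" by measurable
    moreover have "AE \<omega> in M. ?e \<omega> > 0" using xiAE by eventually_elim simp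
    ultimately have eL0: "?e \<in> L0_pp M" by (simp add: L0_pp_def)
    have subG: "{\<eta> \<in> L0 M Kset. AE \<omega> in M. cmod (\<eta> \<omega> - \<xi> \<omega>) \<le> ?e \<omega>} \<subseteq> G"
    proof
      fix \<eta> :: "'w \<Rightarrow> complex" assume "\<eta> \<in> {\<eta> \<in> L0 M Kset. AE \<omega> in M. cmod (\<eta> \<omega> - \<xi> \<omega>) \<le> ?e \<omega>}"
      then have h: "\<eta> \<in> L0 M Kset" "AE \<omega> in M. cmod (\<eta> \<omega> - \<xi> \<omega>) \<le> ?e \<omega>" by auto
      have "AE \<omega> in M. cmod (\<eta> \<omega>) < 1" using h(2) xiAE
      proof eventually_elim
        case (elim \<omega>)
        have "cmod (\<eta> \<omega>) \<le> cmod (\<eta> \<omega> - \<xi> \<omega>) + cmod (\<xi> \<omega>)"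
          using norm_triangle_ineq[of "\<eta> \<omega> - \<xi> \<omega>" "\<xi> \<omega>"] by simp
        moreover have "2 * cmod (\<eta> \<omega> - \<xi> \<omega>) \<le> 1 - cmod (\<xi> \<omega>)" using elim(1) by simp
        ultimately show ?case using elim(2) by linarith
      qed
      then show "\<eta> \<in> G" using h(1) by (simp add: G_def)
    qed
    show "\<exists>\<epsilon>\<in>L0_pp M. {\<eta> \<in> L0 M Kset. AE \<omega> in M. cmod (\<eta> \<omega> - \<xi> \<omega>) \<le> \<epsilon> \<omega>} \<subseteq> G"
      apply (rule bexI[where x="?e"])
       apply (rule subG)
      apply (rule eL0)
      done
  qed
  have f0: "AE \<omega> in M. f 0 \<omega> = 0" using fadd[of 0 0] by eventually_elim simp
  have "AE \<omega> in M. cmod (f 0 \<omega>) < 1" using f0 by eventually_elim simp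
  then have "0 \<in> f -` G" using fL0[of 0] unfolding G_def by simp
  moreover have "eps_lambda_open M \<P> (f -` G)" using assms(6) Gopen by blast
  ultimately have "\<exists>Q \<epsilon> lam. finite Q \<and> Q \<noteq> {} \<and> Q \<subseteq> \<P> \<and> \<epsilon> > 0 \<and> 0 < lam \<and> lam < 1 \<and>
        {0 + y | y. measure M {\<omega> \<in> space M. normQ Q y \<omega> < \<epsilon>} > 1 - lam} \<subseteq> f -` G"
    unfolding eps_lambda_open_def by (rule bspec[rotated])
  then obtain Q \<epsilon> lam where Q: "finite Q" "Q \<noteq> {}" "Q \<subseteq> \<P>" "\<epsilon> > 0" "0 < lam" "lam < 1"
    and sub: "{0 + y | y. measure M {\<omega> \<in> space M. normQ Q y \<omega> < \<epsilon>} > 1 - lam} \<subseteq> f -` G"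
    by (elim exE conjE) blast
  have key: "AE \<omega> in M. \<omega> \<in> B \<longrightarrow> f x \<omega> = 0" if B: "B \<in> sets M" "measure M B < lam" for B
  proof -
    note B(1)[measurable]
    have n1: "AE \<omega> in M. cmod (complex_of_real (of_nat n * indicator B \<omega>) * f x \<omega>) < 1" for n :: nat
    proof -
      define \<xi> where "\<xi> = (\<lambda>\<omega>. complex_of_real (of_nat n * indicator B \<omega>))"
      have "\<xi> \<in> borel_measurable M" unfolding \<xi>_def by measurable
      moreover have "\<xi> \<omega> \<in> Kset" for \<omega> unfolding \<xi>_def by (rule Kreal)
      ultimately have xiL0: "\<xi> \<in> L0 M Kset" unfolding L0_def by blast
      define y where "y = smul \<xi> x"
      have nrm: "AE \<omega> in M. \<forall>p\<in>Q. p y \<omega> = cmod (\<xi> \<omega>) * p x \<omega>"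
        by (rule AE_finite_allI[OF Q(1)]) (use semi Q(3) xiL0 in \<open>auto simp: L0_seminorm_def y_def\<close>)
      have nm[measurable]: "(\<lambda>\<omega>. normQ Q y \<omega>) \<in> borel_measurable M" unfolding normQ_def
        by (rule borel_measurable_Max[OF Q(1)]) (use semi Q(3) in \<open>auto simp: L0_seminorm_def\<close>)
      have Smeas: "{\<omega> \<in> space M. normQ Q y \<omega> < \<epsilon>} \<in> sets M"
        by measurable
      have "AE \<omega> in M. \<omega> \<in> space M - B \<longrightarrow> \<omega> \<in> {\<omega> \<in> space M. normQ Q y \<omega> < \<epsilon>}"
        using nrm
      proof eventually_elim
        case (elim \<omega>)
        show ?case
        proof
          assume om: "\<omega> \<in> space M - B"
          then have "\<xi> \<omega> = 0" by (simp add: \<xi>_def)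
          then have "(\<lambda>p. p y \<omega>) ` Q = {0}" using elim Q(2) by auto
          then show "\<omega> \<in> {\<omega> \<in> space M. normQ Q y \<omega> < \<epsilon>}" using om Q(4) by (simp add: normQ_def)
        qed
      qed
      then have "measure M (space M - B) \<le> measure M {\<omega> \<in> space M. normQ Q y \<omega> < \<epsilon>}"
        using finite_measure_mono_AE Smeas by blast
      moreover have "measure M (space M - B) = 1 - measure M B" by (simp add: prob_compl B)
      ultimately have "measure M {\<omega> \<in> space M. normQ Q y \<omega> < \<epsilon>} > 1 - lam" using B by linarith
      then have "0 + y \<in> {0 + y | y. measure M {\<omega> \<in> space M. normQ Q y \<omega> < \<epsilon>} > 1 - lam}"
        by blast
      then have "0 + y \<in> f -` G" using sub by (rule subsetD[rotated])
      then have "y \<in> f -` G" by simp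
      then have "AE \<omega> in M. cmod (f y \<omega>) < 1" by (simp add: G_def)
      moreover have "AE \<omega> in M. f y \<omega> = \<xi> \<omega> * f x \<omega>" using fsmul xiL0 y_def by auto
      ultimately show ?thesis by eventually_elim (simp add: \<xi>_def)
    qed
    then have "AE \<omega> in M. \<forall>n::nat. cmod (complex_of_real (of_nat n * indicator B \<omega>) * f x \<omega>) < 1"
      by (simp add: AE_all_countable)
    then show ?thesis
    proof eventually_elim
      case (elim \<omega>)
      show ?case
      proof (rule impI, rule ccontr)
        assume om: "\<omega> \<in> B" "f x \<omega> \<noteq> 0"
        then have pos: "cmod (f x \<omega>) > 0" by simp
        obtain n :: nat where n: "1 / cmod (f x \<omega>) < n" using reals_Archimedean2 by blast
        then have "1 < n * cmod (f x \<omega>)" using pos by (simp add: divide_less_eq)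
        moreover have "complex_of_real (of_nat n * indicator B \<omega>) = of_nat n" using om(1) by simp
        then have "cmod (complex_of_real (of_nat n * indicator B \<omega>) * f x \<omega>) = n * cmod (f x \<omega>)"
          by (simp add: norm_mult)
        ultimately show False using elim[rule_format, of n] by linarith
      qed
    qed
  qed
  define A where "A = {\<omega> \<in> space M. f x \<omega> \<noteq> 0}"
  have fxm[measurable]: "f x \<in> borel_measurable M" using fL0[of x] by (simp add: L0_def)
  have Ameas: "A \<in> sets M" unfolding A_def by measurable
  show "AE \<omega> in M. f x \<omega> = 0"
  proof (rule ccontr)
    assume nAE: "\<not> (AE \<omega> in M. f x \<omega> = 0)"
    have "emeasure M A \<noteq> 0" using nAE AE_iff_measurable[OF Ameas, of "\<lambda>\<omega>. f x \<omega> = 0"] A_def by auto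
    then have "measure M A \<noteq> 0" by (simp add: emeasure_eq_measure)
    then have Apos: "measure M A > 0" using measure_nonneg[of M A] by linarith
    obtain B where B: "B \<in> sets M" "B \<subseteq> A" "0 < measure M B" "measure M B < lam"
      using small_subset[OF assms(1,2) Ameas Apos Q(5)] by blast
    have nB: "AE \<omega> in M. \<omega> \<notin> B" using key[OF B(1) B(4)]
    proof eventually_elim
      case (elim \<omega>)
      show ?case
      proof
        assume "\<omega> \<in> B"
        then have "f x \<omega> \<noteq> 0" using B(2) unfolding A_def by blast
        then show False using elim \<open>\<omega> \<in> B\<close> by blast
      qed
    qed
    have eqB: "{\<omega> \<in> space M. \<not> \<omega> \<notin> B} = B" using sets.sets_into_space[OF B(1)] by blast
    have "emeasure M B = 0" using nB AE_iff_measurable[OF B(1) eqB] by simp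
    then show False using B(3) by (simp add: emeasure_eq_measure)
  qed
qed

end
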